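(* Let $\mathcal{G}=\langle\mathcal{Q},\mathbf{f}\rangle$ be a real NEP satisfying Assumptions 1 and 2, and let $\alpha_i^{\min},\beta_{ij}^{\max}$ be computed with $\mathbf{C}_i=\mathbf{I}$ for all $i$. Set $\bar\tau=\max_{1\le i\le I}\{\sum_{j\ne i}\beta_{ij}^{\max}-\alpha_i^{\min}\}$. Then for every $\mathbf{y}\in\mathbb{R}^n$ and every $\tau>\bar\tau$, the game $\mathcal{G}_{\tau,\mathbf{y}}$, in which player $i$ minimizes $f_i(\mathbf{x}_i,\mathbf{x}_{-i})+\frac{\tau}{2}\|\mathbf{x}_i-\mathbf{y}_i\|^2$ over $\mathbf{x}_i\in\mathcal{Q}_i$, is a P$_{\boldsymbol{\Upsilon}}$ NEP.
   Context: Real NEP: player $i$ chooses $\mathbf{x}_i\in\mathcal{Q}_i\subseteq\mathbb{R}^{n_i}$, $n=\sum_in_i$, $\mathcal{Q}=\prod_i\mathcal{Q}_i$, $\mathbf{y}=(\mathbf{y}_i)_i$ with $\mathbf{y}_i\in\mathbb{R}^{n_i}$. Assumption 1: each $\mathcal{Q}_i$ nonempty closed convex; each $f_i$ continuously differentiable on $\mathcal{Q}$ and convex in $\mathbf{x}_i$ for fixed $\mathbf{x}_{-i}$. Assumption 2: each $f_i$ twice continuously differentiable with bounded derivatives on $\mathcal{Q}$. $\mathbf{F}_i=\nabla_{\mathbf{x}_i}f_i$; $\alpha_i^{\min}=\inf_{\mathbf{x}\in\mathcal{Q}}\lambda_{\rm least}(\mathbf{C}_i^T\mathbf{J}_i\mathbf{F}_i(\mathbf{x})\mathbf{C}_i)$,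 $\beta_{ij}^{\max}=\sup_{\mathbf{x}\in\mathcal{Q}}\|\mathbf{C}_i^T\mathbf{J}_j\mathbf{F}_i(\mathbf{x})\mathbf{C}_j\|_2$, where $\mathbf{J}_j\mathbf{F}_i$ is the Jacobian w.r.t. $\mathbf{x}_j$ and $\lambda_{\rm least}(\mathbf{A})$ the smallest eigenvalue of $(\mathbf{A}+\mathbf{A}^T)/2$. $\boldsymbol{\Upsilon}$ of a game is the $I\times I$ matrix with diagonal $\alpha_i^{\min}$, off-diagonal $-\beta_{ij}^{\max}$ computed from that game's gradient map. A game is a P$_{\boldsymbol{\Upsilon}}$ NEP if it satisfies Assumptions 1 and 2 and its $\boldsymbol{\Upsilon}$ is a P-matrix (all principal minors positive). *)

theory Defs
  imports "HOL-Analysis.Analysis"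
begin

text \<open>Joint strategy space R^n is modelled as real^'n (finite coordinate type 'n).
 A block map p assigns each coordinate to a player in {0..<N}; player i owns
 the coordinates blk p i.  R^{n_i} is identified with the vectors of real^'n
 supported on blk p i.\<close>

definition blk :: "('n \<Rightarrow> nat) \<Rightarrow> nat \<Rightarrow> 'n set" where
  "blk p i = {k. p k = i}"

definition proj :: "'n set \<Rightarrow> real^'n \<Rightarrow> real^'n" where
  "proj S v = (\<chi> k. if k \<in> S then v $ k else 0)"

text \<open>Well-formed player partition: N players, each coordinate owned by a player,
 each player owns at least one coordinate.\<close>
definition players :: "nat \<Rightarrow> ('n \<Rightarrow> nat) \<Rightarrow> bool" where
  "players N p \<longleftrightarrow> (\<forall>k. p k < N) \<and> (\<forall>i<N. blk p i \<noteq> {})"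

text \<open>Joint feasible set Q = prod_i Q_i.\<close>
definition jointQ :: "nat \<Rightarrow> ('n \<Rightarrow> nat) \<Rightarrow> (nat \<Rightarrow> (real^'n) set) \<Rightarrow> (real^'n) set" where
  "jointQ N p Qs = {x. \<forall>i<N. proj (blk p i) x \<in> Qs i}"

text \<open>Full gradient and player i's gradient map F_i = nabla_{x_i} f_i.\<close>
definition gradF :: "(real^'n \<Rightarrow> real) \<Rightarrow> real^'n \<Rightarrow> real^'n" where
  "gradF g x = (\<chi> k. frechet_derivative g (at x) (axis k 1))"

definition Fmap :: "('n \<Rightarrow> nat) \<Rightarrow> (nat \<Rightarrow> real^'n \<Rightarrow> real) \<Rightarrow> nat \<Rightarrow> real^'n \<Rightarrow> real^'n" where
  "Fmap p f i x = proj (blk p i) (gradF (f i) x)"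

text \<open>Jacobian of F_i (an n x n matrix); its (i,j) block is J_j F_i.\<close>
definition JF :: "('n \<Rightarrow> nat) \<Rightarrow> (nat \<Rightarrow> real^'n \<Rightarrow> real) \<Rightarrow> nat \<Rightarrow> real^'n \<Rightarrow> real^'n^'n" where
  "JF p f i x = jacobian (Fmap p f i) (at x)"

text \<open>Eigenvalues of the principal sub-block of M indexed by S (i.e. of C^T M C with
 C the coordinate inclusion), and the smallest eigenvalue of its symmetric part.\<close>
definition block_eigenvalue :: "'n set \<Rightarrow> real^'n^'n \<Rightarrow> real \<Rightarrow> bool" where
  "block_eigenvalue S M l \<longleftrightarrow>
     (\<exists>v. v \<noteq> 0 \<and> proj S v = v \<and> proj S (M *v v) = l *\<^sub>R v)"

definition lambda_least :: "'n set \<Rightarrow> real^'n^'n \<Rightarrow> real" where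
  "lambda_least S M = Min {l. block_eigenvalue S ((1/2) *\<^sub>R (M + transpose M)) l}"

text \<open>Spectral (operator 2-) norm of the block of M with rows S and columns T.\<close>
definition block_norm :: "'n set \<Rightarrow> 'n set \<Rightarrow> real^'n^'n \<Rightarrow> real" where
  "block_norm S T M = onorm (\<lambda>v. proj S (M *v proj T v))"

text \<open>alpha_i^min and beta_ij^max with C_i = I.\<close>
definition alpha_min :: "nat \<Rightarrow> ('n \<Rightarrow> nat) \<Rightarrow> (nat \<Rightarrow> (real^'n) set) \<Rightarrow> (nat \<Rightarrow> real^'n \<Rightarrow> real) \<Rightarrow> nat \<Rightarrow> real" where
  "alpha_min N p Qs f i =
     Inf ((\<lambda>x. lambda_least (blk p i) (JF p f i x)) ` jointQ N p Qs)"

definition beta_max :: "nat \<Rightarrow> ('n \<Rightarrow> nat) \<Rightarrow> (nat \<Rightarrow> (real^'n) set) \<Rightarrow> (nat \<Rightarrow> real^'n \<Rightarrow> real) \<Rightarrow> nat \<Rightarrow> nat \<Rightarrow> real" where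
  "beta_max N p Qs f i j =
     Sup ((\<lambda>x. block_norm (blk p i) (blk p j) (JF p f i x)) ` jointQ N p Qs)"

definition Upsilon :: "nat \<Rightarrow> ('n \<Rightarrow> nat) \<Rightarrow> (nat \<Rightarrow> (real^'n) set) \<Rightarrow> (nat \<Rightarrow> real^'n \<Rightarrow> real) \<Rightarrow> nat \<Rightarrow> nat \<Rightarrow> real" where
  "Upsilon N p Qs f i j = (if i = j then alpha_min N p Qs f i else - beta_max N p Qs f i j)"

text \<open>Principal minor (Leibniz determinant of the submatrix indexed by S) and P-matrix.\<close>
definition principal_minor :: "(nat \<Rightarrow> nat \<Rightarrow> real) \<Rightarrow> nat set \<Rightarrow> real" where
  "principal_minor A S = (\<Sum>\<pi> | \<pi> permutes S. of_int (sign \<pi>) * (\<Prod>i\<in>S. A i (\<pi> i)))"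

definition P_matrix :: "nat \<Rightarrow> (nat \<Rightarrow> nat \<Rightarrow> real) \<Rightarrow> bool" where
  "P_matrix N A \<longleftrightarrow> (\<forall>S. S \<subseteq> {..<N} \<and> S \<noteq> {} \<longrightarrow> principal_minor A S > 0)"

text \<open>Assumption 1.  Differentiability "on Q" is taken on an open neighbourhood of Q.\<close>
definition assumption1 :: "nat \<Rightarrow> ('n \<Rightarrow> nat) \<Rightarrow> (nat \<Rightarrow> (real^'n) set) \<Rightarrow> (nat \<Rightarrow> real^'n \<Rightarrow> real) \<Rightarrow> bool" where
  "assumption1 N p Qs f \<longleftrightarrow>
     (\<forall>i<N. Qs i \<noteq> {} \<and> closed (Qs i) \<and> convex (Qs i) \<and> Qs i \<subseteq> {v. proj (blk p i) v = v}) \<and>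
     (\<forall>i<N. \<exists>U. open U \<and> jointQ N p Qs \<subseteq> U \<and>
        (\<forall>x\<in>U. f i differentiable (at x)) \<and> continuous_on U (gradF (f i))) \<and>
     (\<forall>i<N. \<forall>x\<in>jointQ N p Qs.
        convex_on (Qs i) (\<lambda>v. f i (v + (x - proj (blk p i) x))))"

text \<open>Assumption 2: C^2 on an open neighbourhood of Q, second derivatives bounded on Q.\<close>
definition assumption2 :: "nat \<Rightarrow> ('n \<Rightarrow> nat) \<Rightarrow> (nat \<Rightarrow> (real^'n) set) \<Rightarrow> (nat \<Rightarrow> real^'n \<Rightarrow> real) \<Rightarrow> bool" where
  "assumption2 N p Qs f \<longleftrightarrow>
     (\<forall>i<N. \<exists>U. open U \<and> jointQ N p Qs \<subseteq> U \<and>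
        (\<forall>x\<in>U. f i differentiable (at x)) \<and>
        (\<forall>x\<in>U. gradF (f i) differentiable (at x)) \<and>
        continuous_on U (\<lambda>x. jacobian (gradF (f i)) (at x)) \<and>
        bounded ((\<lambda>x. jacobian (gradF (f i)) (at x)) ` jointQ N p Qs))"

definition P_Upsilon_NEP :: "nat \<Rightarrow> ('n \<Rightarrow> nat) \<Rightarrow> (nat \<Rightarrow> (real^'n) set) \<Rightarrow> (nat \<Rightarrow> real^'n \<Rightarrow> real) \<Rightarrow> bool" where
  "P_Upsilon_NEP N p Qs f \<longleftrightarrow>
     assumption1 N p Qs f \<and> assumption2 N p Qs f \<and> P_matrix N (Upsilon N p Qs f)"

text \<open>The regularized game G_{tau,y}.\<close>
definition regularized :: "('n \<Rightarrow> nat) \<Rightarrow> (nat \<Rightarrow> real^'n \<Rightarrow> real) \<Rightarrow> real \<Rightarrow> real^'n \<Rightarrow> nat \<Rightarrow> real^'n \<Rightarrow> real" where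
  "regularized p f tau y i x = f i x + tau / 2 * (norm (proj (blk p i) x - proj (blk p i) y))\<^sup>2"

end

theory Submission
  imports Defs Jordan_Normal_Form.Determinant
begin

no_notation vec_index (infixl "$" 100)


lemma dd_nonsing:
  fixes C :: "real mat"
  assumes C: "C \<in> carrier_mat n n"
    and dd: "\<forall>i<n. \<bar>C$$(i,i)\<bar> > (\<Sum>j\<in>{0..<n}-{i}. \<bar>C$$(i,j)\<bar>)"
  shows "det C \<noteq> 0"
proof
  assume "det C = 0"
  then obtain v where v: "v \<in> carrier_vec n" "v \<noteq> 0\<^sub>v n" "C *\<^sub>v v = 0\<^sub>v n"
    using det_0_iff_vec_prod_zero[OF C] by blast
  have "\<exists>k<n. vec_index v k \<noteq> 0"
    using v by (auto simp: vec_eq_iff)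
  then obtain k where k: "k < n" "vec_index v k \<noteq> 0" by blast
  define m where "m = Max ((\<lambda>i. \<bar>vec_index v i\<bar>) ` {0..<n})"
  have "m \<in> (\<lambda>i. \<bar>vec_index v i\<bar>) ` {0..<n}" unfolding m_def using k by (intro Max_in) auto
  then obtain i where i: "i < n" "\<bar>vec_index v i\<bar> = m" by auto
  have mge: "\<And>j. j < n \<Longrightarrow> \<bar>vec_index v j\<bar> \<le> m" unfolding m_def by (intro Max_ge) auto
  have "m > 0" using mge[OF k(1)] k(2) by auto
  have "vec_index (C *\<^sub>v v) i = 0" using v i by simp
  hence "(\<Sum>j=0..<n. C$$(i,j) * vec_index v j) = 0"
    using C v i by (simp add: mult_mat_vec_def scalar_prod_def row_def)
  moreover have "(\<Sum>j=0..<n. C$$(i,j) * vec_index v j) = C$$(i,i) * vec_index v i + (\<Sum>j\<in>{0..<n}-{i}. C$$(i,j) * vec_index v j)"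
    using i by (subst sum.remove[of _ i]) auto
  ultimately have "\<bar>C$$(i,i) * vec_index v i\<bar> = \<bar>\<Sum>j\<in>{0..<n}-{i}. C$$(i,j) * vec_index v j\<bar>" by linarith
  also have "\<dots> \<le> (\<Sum>j\<in>{0..<n}-{i}. \<bar>C$$(i,j)\<bar> * m)"
    by (rule order_trans[OF sum_abs]) (auto intro!: sum_mono mult_left_mono mge simp: abs_mult)
  also have "\<dots> = (\<Sum>j\<in>{0..<n}-{i}. \<bar>C$$(i,j)\<bar>) * m" by (simp add: sum_distrib_right)
  also have "\<dots> < \<bar>C$$(i,i)\<bar> * m" using dd i \<open>m>0\<close> by auto
  finally show False using i by (simp add: abs_mult)
qed

lemma dd_det_pos:
  fixes B :: "real mat"
  assumes B: "B \<in> carrier_mat n n"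
    and dd: "\<forall>i<n. B$$(i,i) > (\<Sum>j\<in>{0..<n}-{i}. \<bar>B$$(i,j)\<bar>)"
  shows "det B > 0"
proof -
  define C where "C t = mat n n (\<lambda>(i,j). t * B$$(i,j) + (1-t) * (if i=j then B$$(i,i) else 0))" for t :: real
  have Cc: "C t \<in> carrier_mat n n" for t unfolding C_def by simp
  have nz: "det (C t) \<noteq> 0" if t: "0 \<le> t" "t \<le> 1" for t
  proof (rule dd_nonsing[OF Cc], intro allI impI)
    fix i assume i: "i < n"
    have "(\<Sum>j\<in>{0..<n}-{i}. \<bar>C t$$(i,j)\<bar>) = (\<Sum>j\<in>{0..<n}-{i}. t * \<bar>B$$(i,j)\<bar>)"
      using i t by (intro sum.cong) (auto simp: C_def abs_mult)
    also have "\<dots> \<le> (\<Sum>j\<in>{0..<n}-{i}. \<bar>B$$(i,j)\<bar>)"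
      using t by (intro sum_mono) (simp add: mult_left_le_one_le)
    also have "\<dots> < B$$(i,i)" using dd i by auto
    also have "B$$(i,i) = \<bar>C t$$(i,i)\<bar>" using i dd by (simp add: C_def algebra_simps)
      (smt (verit) sum_nonneg abs_ge_zero)
    finally show "\<bar>C t$$(i,i)\<bar> > (\<Sum>j\<in>{0..<n}-{i}. \<bar>C t$$(i,j)\<bar>)" .
  qed
  have ceq: "(\<lambda>t. det (C t)) = (\<lambda>t. \<Sum>p\<in>{p. p permutes {0..<n}}. signof p *
      (\<Prod>i=0..<n. t * B$$(i,p i) + (1-t) * (if i = p i then B$$(i,i) else 0)))"
  proof (rule ext)
    fix t
    show "det (C t) = (\<Sum>p\<in>{p. p permutes {0..<n}}. signof p *
      (\<Prod>i=0..<n. t * B$$(i,p i) + (1-t) * (if i = p i then B$$(i,i) else 0)))"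
      unfolding det_def'[OF Cc]
      by (intro sum.cong refl arg_cong2[where f="(*)"] prod.cong)
         (auto simp: C_def permutes_in_image)
  qed
  have cont: "continuous_on {0..1} (\<lambda>t. det (C t))"
    unfolding ceq by (intro continuous_intros)
  have "det (C 0) = (\<Prod>i=0..<n. B$$(i,i))"
  proof -
    have "upper_triangular (C 0)" unfolding C_def by (auto intro!: upper_triangularI)
    hence "det (C 0) = prod_list (diag_mat (C 0))" by (rule det_upper_triangular[OF _ Cc])
    also have "\<dots> = (\<Prod>i=0..<n. C 0 $$(i,i))" using Cc[of 0] by (simp add: prod_list_diag_prod)
    also have "\<dots> = (\<Prod>i=0..<n. B$$(i,i))" by (intro prod.cong) (auto simp: C_def)
    finally show ?thesis .
  qed
  moreover have "\<forall>i<n. B$$(i,i) > 0" using dd by (meson le_less_trans sum_nonneg abs_ge_zero)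
  ultimately have d0: "det (C 0) > 0" by (auto intro: prod_pos)
  have C1: "C 1 = B" unfolding C_def using B by (intro eq_matI) auto
  show ?thesis
  proof (rule ccontr)
    assume "\<not> det B > 0"
    hence "det (C 1) \<le> 0" using C1 by simp
    then obtain t where "0 \<le> t" "t \<le> 1" "det (C t) = 0"
      using IVT2'[of "\<lambda>t. det (C t)" 1 0 0] cont d0 by auto
    with nz show False by blast
  qed
qed


lemma pm_det:
  assumes S: "S \<subseteq> {..<N}"
  shows "principal_minor A S = det (mat N N (\<lambda>(i,j). if i\<in>S \<and> j\<in>S then A i j else if i=j then 1 else 0))"
proof -
  let ?E = "mat N N (\<lambda>(i,j). if i\<in>S \<and> j\<in>S then A i j else if i=j then 1 else 0)"
  have Ec: "?E \<in> carrier_mat N N" by simp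
  have "det ?E = (\<Sum>p\<in>{p. p permutes {0..<N}}. signof p * (\<Prod>i=0..<N. ?E $$ (i, p i)))"
    by (rule det_def'[OF Ec])
  also have "\<dots> = (\<Sum>p\<in>{p. p permutes S}. of_int (sign p) * (\<Prod>i\<in>S. A i (p i)))"
  proof (rule sym, rule sum.mono_neutral_cong_left)
    show "finite {p. p permutes {0..<N}}" by (simp add: finite_permutations)
    show "{p. p permutes S} \<subseteq> {p. p permutes {0..<N}}" using S by (auto intro: permutes_subset simp: atLeast0LessThan)
    show "\<forall>p\<in>{p. p permutes {0..<N}} - {p. p permutes S}. signof p * (\<Prod>i=0..<N. ?E $$ (i, p i)) = 0"
    proof
      fix p assume p: "p \<in> {p. p permutes {0..<N}} - {p. p permutes S}"
      hence pN: "p permutes {0..<N}" and pS: "\<not> p permutes S" by auto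
      have "\<exists>i. i \<notin> S \<and> p i \<noteq> i"
      proof (rule ccontr)
        assume "\<not> ?thesis"
        hence "\<forall>i. i \<notin> S \<longrightarrow> p i = i" by auto
        moreover have "\<forall>y. \<exists>!x. p x = y" using pN unfolding permutes_def by blast
        ultimately have "p permutes S" unfolding permutes_def by blast
        with pS show False by simp
      qed
      then obtain i where i: "i \<notin> S" "p i \<noteq> i" by blast
      have iN: "i < N" using i pN unfolding permutes_def by fastforce
      have "p i < N" using pN iN permutes_in_image by fastforce
      hence "?E $$ (i, p i) = 0" using i iN by simp
      hence "(\<Prod>i=0..<N. ?E $$ (i, p i)) = 0" using iN by (intro prod_zero) auto
      thus "signof p * (\<Prod>i=0..<N. ?E $$ (i, p i)) = 0" by simp
    qed
    show "of_int (sign p) * (\<Prod>i\<in>S. A i (p i)) = signof p * (\<Prod>i=0..<N. ?E $$ (i, p i))"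
      if "p \<in> {p. p permutes S}" for p
    proof -
      have pS: "p permutes S" using that by simp
      have "(\<Prod>i=0..<N. ?E $$ (i, p i)) = (\<Prod>i\<in>S. ?E $$ (i, p i))"
      proof (rule sym, rule prod.mono_neutral_left)
        show "finite {0..<N}" by simp
        show "S \<subseteq> {0..<N}" using S by auto
        show "\<forall>i\<in>{0..<N} - S. ?E $$ (i, p i) = 1"
          using pS unfolding permutes_def by auto
      qed
      also have "\<dots> = (\<Prod>i\<in>S. A i (p i))"
      proof (rule prod.cong[OF refl])
        fix i assume i: "i \<in> S"
        hence "p i \<in> S" using pS permutes_in_image by fastforce
        moreover have "i < N" "p i < N" using i \<open>p i \<in> S\<close> S by auto
        ultimately show "?E $$ (i, p i) = A i (p i)" using i by simp
      qed
      finally show "of_int (sign p) * (\<Prod>i\<in>S. A i (p i)) = signof p * (\<Prod>i=0..<N. ?E $$ (i, p i))"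
        by simp
    qed
  qed
  finally show ?thesis unfolding principal_minor_def by simp
qed

lemma dd_principal_minor_pos:
  assumes S: "S \<subseteq> {..<N}" and dd: "\<forall>i\<in>S. A i i > (\<Sum>j\<in>S-{i}. \<bar>A i j\<bar>)"
  shows "principal_minor A S > 0"
proof -
  let ?B = "mat N N (\<lambda>(i,j). if i\<in>S \<and> j\<in>S then A i j else if i=j then 1 else (0::real))"
  have "det ?B > 0"
  proof (rule dd_det_pos)
    show "?B \<in> carrier_mat N N" by simp
    show "\<forall>i<N. ?B $$ (i,i) > (\<Sum>j\<in>{0..<N}-{i}. \<bar>?B $$ (i,j)\<bar>)"
    proof (intro allI impI)
      fix i assume i: "i < N"
      show "?B $$ (i,i) > (\<Sum>j\<in>{0..<N}-{i}. \<bar>?B $$ (i,j)\<bar>)"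
      proof (cases "i \<in> S")
        case True
        have "(\<Sum>j\<in>{0..<N}-{i}. \<bar>?B $$ (i,j)\<bar>) = (\<Sum>j\<in>S-{i}. \<bar>?B $$ (i,j)\<bar>)"
          by (rule sum.mono_neutral_right) (use S True i in auto)
        also have "\<dots> = (\<Sum>j\<in>S-{i}. \<bar>A i j\<bar>)"
          by (rule sum.cong) (use S True i in auto)
        also have "\<dots> < A i i" using dd True by blast
        finally show ?thesis using True i by simp
      next
        case False
        have "(\<Sum>j\<in>{0..<N}-{i}. \<bar>?B $$ (i,j)\<bar>) = 0"
          by (rule sum.neutral) (use False i in auto)
        thus ?thesis using False i by simp
      qed
    qed
  qed
  thus ?thesis using pm_det[OF S, of A] by simp
qed


lemma proj_nth[simp]: "proj S v $ k = (if k \<in> S then v $ k else 0)"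
  by (simp add: proj_def)

lemma proj_add: "proj S (v + w) = proj S v + proj S w"
  by (simp add: Finite_Cartesian_Product.vec_eq_iff)
lemma proj_diff: "proj S (v - w) = proj S v - proj S w"
  by (simp add: Finite_Cartesian_Product.vec_eq_iff)
lemma proj_scaleR: "proj S (c *\<^sub>R v) = c *\<^sub>R proj S v"
  by (simp add: Finite_Cartesian_Product.vec_eq_iff)
lemma proj_zero[simp]: "proj S 0 = 0"
  by (simp add: Finite_Cartesian_Product.vec_eq_iff)
lemma linear_proj: "linear (proj S)"
  by (rule linearI) (simp_all add: proj_add proj_scaleR)
lemma bounded_linear_proj: "bounded_linear (proj S)"
  using linear_proj linear_conv_bounded_linear by blast
lemma proj_idem[simp]: "proj S (proj S v) = proj S v"
  by (simp add: Finite_Cartesian_Product.vec_eq_iff)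
lemma proj_disj: "S \<inter> T = {} \<Longrightarrow> proj S (proj T v) = 0"
  by (auto simp: Finite_Cartesian_Product.vec_eq_iff)
lemma proj_inner: "proj S v \<bullet> w = v \<bullet> proj S w"
  unfolding inner_vec_def by (intro sum.cong) auto
lemma norm_proj_le: "norm (proj S v) \<le> norm v"
  unfolding norm_le inner_vec_def by (intro sum_mono) auto

definition symA :: "real^'n^'n \<Rightarrow> real^'n^'n" where
  "symA M = (1/2) *\<^sub>R (M + transpose M)"

lemma lambda_least_symA: "lambda_least S M = Min {l. block_eigenvalue S (symA M) l}"
  by (simp add: lambda_least_def symA_def)

lemma symA_transpose: "transpose (symA M) = symA M"
  by (simp add: Finite_Cartesian_Product.vec_eq_iff transpose_def symA_def)

lemma sym_inner:
  fixes A :: "real^'n^'n"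
  assumes "transpose A = A"
  shows "w \<bullet> (A *v v) = v \<bullet> (A *v w)"
proof -
  have "w \<bullet> (A *v v) = (w v* A) \<bullet> v" by (simp add: dot_lmul_matrix)
  also have "\<dots> = (transpose A *v w) \<bullet> v" by simp
  also have "\<dots> = v \<bullet> (A *v w)" using assms by (simp add: inner_commute)
  finally show ?thesis .
qed

lemma symA_quad: "v \<bullet> (symA M *v v) = v \<bullet> (M *v v)"
proof -
  have "v \<bullet> (transpose M *v v) = v \<bullet> (M *v v)"
    by (subst inner_commute) (simp add: dot_lmul_matrix)
  thus ?thesis
    by (simp add: symA_def scaleR_matrix_vector_assoc[symmetric] matrix_vector_mult_add_rdistrib inner_add_right)
qed

lemma eig_rayleigh:
  assumes "block_eigenvalue S (symA M) l"
  shows "\<exists>v. v \<noteq> 0 \<and> proj S v = v \<and> l * (v \<bullet> v) = v \<bullet> (M *v v)"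
proof -
  obtain v where v: "v \<noteq> 0" "proj S v = v" "proj S (symA M *v v) = l *\<^sub>R v"
    using assms unfolding block_eigenvalue_def by blast
  have "l * (v \<bullet> v) = v \<bullet> (l *\<^sub>R v)" by simp
  also have "\<dots> = v \<bullet> proj S (symA M *v v)" using v by simp
  also have "\<dots> = proj S v \<bullet> (symA M *v v)" by (simp add: proj_inner)
  also have "\<dots> = v \<bullet> (M *v v)" using v by (simp add: symA_quad)
  finally show ?thesis using v by blast
qed

lemma eig_finite: "finite {l. block_eigenvalue S (symA M) l}"
proof -
  let ?A = "symA M"
  let ?E = "{l. block_eigenvalue S ?A l}"
  define g where "g l = (SOME v. v \<noteq> 0 \<and> proj S v = v \<and> proj S (?A *v v) = l *\<^sub>R v)" for l
  have g: "g l \<noteq> 0 \<and> proj S (g l) = g l \<and> proj S (?A *v g l) = l *\<^sub>R g l" if "l \<in> ?E" for l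
    using that unfolding g_def block_eigenvalue_def mem_Collect_eq by (rule someI_ex)
  have inj: "inj_on g ?E"
  proof (rule inj_onI)
    fix l1 l2 assume l: "l1 \<in> ?E" "l2 \<in> ?E" "g l1 = g l2"
    hence "l1 *\<^sub>R g l1 = l2 *\<^sub>R g l1" using g[OF l(1)] g[OF l(2)] by metis
    thus "l1 = l2" using g[OF l(1)] by simp
  qed
  have orth: "g l1 \<bullet> g l2 = 0" if l: "l1 \<in> ?E" "l2 \<in> ?E" "l1 \<noteq> l2" for l1 l2
  proof -
    have "l1 * (g l1 \<bullet> g l2) = (l1 *\<^sub>R g l1) \<bullet> g l2" by simp
    also have "\<dots> = proj S (?A *v g l1) \<bullet> g l2" using g[OF l(1)] by simp
    also have "\<dots> = (?A *v g l1) \<bullet> proj S (g l2)" by (simp add: proj_inner)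
    also have "\<dots> = g l2 \<bullet> (?A *v g l1)" using g[OF l(2)] by (simp add: inner_commute)
    also have "\<dots> = g l1 \<bullet> (?A *v g l2)" by (rule sym_inner[OF symA_transpose])
    also have "\<dots> = proj S (g l1) \<bullet> (?A *v g l2)" using g[OF l(1)] by simp
    also have "\<dots> = g l1 \<bullet> (l2 *\<^sub>R g l2)" using g[OF l(2)] by (simp add: proj_inner)
    also have "\<dots> = l2 * (g l1 \<bullet> g l2)" by simp
    finally have "(l1 - l2) * (g l1 \<bullet> g l2) = 0" by (simp add: algebra_simps)
    thus ?thesis using l(3) by simp
  qed
  have "pairwise Linear_Algebra.orthogonal (g ` ?E)"
    unfolding pairwise_def Linear_Algebra.orthogonal_def
    using orth by (metis (no_types, lifting) imageE)
  moreover have "0 \<notin> g ` ?E" using g by auto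
  ultimately have "independent (g ` ?E)" by (rule pairwise_orthogonal_independent)
  hence "finite (g ` ?E)" by (rule independent_imp_finite)
  thus ?thesis using inj finite_imageD by blast
qed

lemma quad_nonneg_zero:
  fixes a c :: real
  assumes "\<And>t. 0 \<le> 2*t*a + t^2*c" "a \<ge> 0"
  shows "a = 0"
proof (rule ccontr)
  assume "a \<noteq> 0"
  hence a: "a > 0" using assms(2) by simp
  define d where "d = \<bar>c\<bar> + 1"
  define t where "t = - a / d"
  have d: "d > 0" unfolding d_def by simp
  have td: "t * d = - a" unfolding t_def using d by simp
  have "0 \<le> 2*t*a + t^2*c" by (rule assms(1))
  hence "0 \<le> (2*t*a + t^2*c) * d^2" using d by simp
  also have "\<dots> = 2*(t*d)*a*d + (t*d)^2*c" by (simp add: power2_eq_square algebra_simps)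
  also have "\<dots> = -2*a^2*d + a^2*c"
    unfolding td by (simp add: power2_eq_square algebra_simps)
  also have "\<dots> \<le> -2*a^2*d + a^2*\<bar>c\<bar>"
    by (intro add_left_mono mult_left_mono) auto
  also have "\<dots> = - (a^2 * (\<bar>c\<bar> + 2))" unfolding d_def by (simp add: algebra_simps)
  also have "\<dots> < 0" using a by (simp add: add_pos_nonneg)
  finally show False by simp
qed

lemma eig_min:
  fixes M :: "real^'n^'n"
  assumes S: "S \<noteq> {}"
  shows "\<exists>l. block_eigenvalue S (symA M) l \<and> (\<forall>w. proj S w = w \<longrightarrow> l * (w \<bullet> w) \<le> w \<bullet> (M *v w))"
proof -
  let ?A = "symA M"
  define q where "q v = v \<bullet> (?A *v v)" for v :: "real^'n"
  define K where "K = {v. proj S v = v} \<inter> sphere (0::real^'n) 1"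
  have "closed {v::real^'n. proj S v = v}"
    by (intro closed_Collect_eq continuous_on_id bounded_linear.continuous_on[OF bounded_linear_proj])
  hence cK: "compact K" unfolding K_def by (intro closed_Int_compact compact_sphere)
  obtain k where "k \<in> S" using S by blast
  have "proj S (axis k 1) = axis k 1" using \<open>k \<in> S\<close> by (auto simp: Finite_Cartesian_Product.vec_eq_iff axis_def)
  hence "axis k 1 \<in> K" unfolding K_def by simp
  hence neK: "K \<noteq> {}" by blast
  have cq: "continuous_on K q" unfolding q_def
    by (intro continuous_intros bounded_linear.continuous_on[OF matrix_vector_mul_bounded_linear])
  obtain v0 where v0: "v0 \<in> K" and min: "\<And>y. y \<in> K \<Longrightarrow> q v0 \<le> q y"
    using continuous_attains_inf[OF cK neK cq] by blast
  define r where "r = q v0"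
  have pv0: "proj S v0 = v0" and nv0: "norm v0 = 1" using v0 unfolding K_def by auto
  have vv0: "v0 \<bullet> v0 = 1" using nv0 by (simp add: norm_eq_1)
  have qscale: "q (c *\<^sub>R w) = c^2 * q w" for c w
    unfolding q_def by (simp add: matrix_vector_mult_scaleR power2_eq_square)
  have ray: "r * (w \<bullet> w) \<le> q w" if pw: "proj S w = w" for w
  proof (cases "w = 0")
    case True thus ?thesis by (simp add: q_def)
  next
    case False
    define w' where "w' = (1 / norm w) *\<^sub>R w"
    have "w' \<in> K" unfolding K_def w'_def using pw False by (auto simp: proj_scaleR)
    hence "r \<le> q w'" using min unfolding r_def by blast
    also have "q w' = q w / (norm w)^2" unfolding w'_def qscale by (simp add: power_divide)
    finally have "r * (norm w)^2 \<le> q w" using False by (simp add: field_simps)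
    thus ?thesis by (simp add: power2_norm_eq_inner)
  qed
  define u where "u = proj S (?A *v v0) - r *\<^sub>R v0"
  have pu: "proj S u = u" unfolding u_def by (simp add: proj_diff proj_scaleR pv0)
  have uA: "u \<bullet> (?A *v v0) = u \<bullet> u + r * (u \<bullet> v0)"
  proof -
    have "u \<bullet> (?A *v v0) = proj S u \<bullet> (?A *v v0)" using pu by simp
    also have "\<dots> = u \<bullet> proj S (?A *v v0)" by (simp add: proj_inner)
    also have "proj S (?A *v v0) = u + r *\<^sub>R v0" unfolding u_def by simp
    finally show ?thesis by (simp add: inner_add_right)
  qed
  have symq: "v0 \<bullet> (?A *v u) = u \<bullet> (?A *v v0)" by (rule sym_inner[OF symA_transpose, symmetric])
  have "0 \<le> 2*t*(u \<bullet> u) + t^2*(q u - r * (u \<bullet> u))" for t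
  proof -
    have "proj S (v0 + t *\<^sub>R u) = v0 + t *\<^sub>R u" by (simp add: proj_add proj_scaleR pv0 pu)
    hence A: "r * ((v0 + t *\<^sub>R u) \<bullet> (v0 + t *\<^sub>R u)) \<le> q (v0 + t *\<^sub>R u)" by (rule ray)
    have B: "(v0 + t *\<^sub>R u) \<bullet> (v0 + t *\<^sub>R u) = 1 + 2*t*(u \<bullet> v0) + t^2 * (u \<bullet> u)"
      using vv0 by (simp add: inner_add_left inner_add_right inner_commute power2_eq_square algebra_simps)
    have C: "q (v0 + t *\<^sub>R u) = r + 2*t*(u \<bullet> (?A *v v0)) + t^2 * q u"
      unfolding q_def r_def using symq
      by (simp add: matrix_vector_right_distrib matrix_vector_mult_scaleR inner_add_left inner_add_right
            power2_eq_square algebra_simps q_def)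
    have "r * (1 + 2*t*(u \<bullet> v0) + t^2 * (u \<bullet> u)) \<le> r + 2*t*(u \<bullet> u + r * (u \<bullet> v0)) + t^2 * q u"
      using A unfolding B C uA .
    thus ?thesis by (simp add: algebra_simps)
  qed
  hence "u \<bullet> u = 0" by (intro quad_nonneg_zero) auto
  hence "u = 0" by simp
  hence eig: "proj S (?A *v v0) = r *\<^sub>R v0" unfolding u_def by simp
  have "v0 \<noteq> 0" using nv0 by auto
  hence "block_eigenvalue S ?A r" unfolding block_eigenvalue_def using pv0 eig by blast
  moreover have "\<forall>w. proj S w = w \<longrightarrow> r * (w \<bullet> w) \<le> w \<bullet> (M *v w)"
    using ray unfolding q_def symA_quad by blast
  ultimately show ?thesis by blast
qed

lemma lambda_rayleigh:
  assumes "S \<noteq> {}" "proj S w = w"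
  shows "lambda_least S M * (w \<bullet> w) \<le> w \<bullet> (M *v w)"
proof -
  obtain l where l: "block_eigenvalue S (symA M) l" "\<forall>w. proj S w = w \<longrightarrow> l * (w \<bullet> w) \<le> w \<bullet> (M *v w)"
    using eig_min[OF assms(1)] by blast
  have "lambda_least S M \<le> l" unfolding lambda_least_symA using l(1) eig_finite by (intro Min_le) auto
  hence "lambda_least S M * (w \<bullet> w) \<le> l * (w \<bullet> w)" by (intro mult_right_mono) auto
  also have "\<dots> \<le> w \<bullet> (M *v w)" using l(2) assms(2) by blast
  finally show ?thesis .
qed

lemma lambda_attained:
  assumes "S \<noteq> {}"
  shows "\<exists>v. v \<noteq> 0 \<and> proj S v = v \<and> lambda_least S M * (v \<bullet> v) = v \<bullet> (M *v v)"
proof -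
  have ne: "{l. block_eigenvalue S (symA M) l} \<noteq> {}" using eig_min[OF assms] by blast
  have "block_eigenvalue S (symA M) (lambda_least S M)"
    unfolding lambda_least_symA using Min_in[OF eig_finite ne] by simp
  thus ?thesis by (rule eig_rayleigh)
qed



lemma grad_apply:
  fixes F :: "real^'n \<Rightarrow> real"
  assumes "F differentiable (at z)"
  shows "frechet_derivative F (at z) d = gradF F z \<bullet> d"
proof -
  let ?L = "frechet_derivative F (at z)"
  have "(F has_derivative ?L) (at z)" using assms frechet_derivative_works by blast
  hence lin: "linear ?L" using has_derivative_linear by blast
  have "?L d = ?L (\<Sum>k\<in>UNIV. (d$k) *\<^sub>R axis k 1)"
    using basis_expansion[of d] by (simp add: scalar_mult_eq_scaleR)
  also have "\<dots> = (\<Sum>k\<in>UNIV. d$k * ?L (axis k 1))"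
    using lin by (simp add: linear_sum linear_scale)
  also have "\<dots> = gradF F z \<bullet> d"
    unfolding gradF_def inner_vec_def by (simp add: mult.commute)
  finally show ?thesis .
qed

lemma line_deriv:
  fixes F :: "real^'n \<Rightarrow> real"
  assumes "F differentiable (at (a + t *\<^sub>R d))"
  shows "((\<lambda>s. F (a + s *\<^sub>R d)) has_real_derivative (gradF F (a + t *\<^sub>R d) \<bullet> d)) (at t)"
proof -
  let ?L = "frechet_derivative F (at (a + t *\<^sub>R d))"
  have F: "(F has_derivative ?L) (at (a + t *\<^sub>R d))" using assms frechet_derivative_works by blast
  hence lin: "linear ?L" using has_derivative_linear by blast
  have l: "((\<lambda>s. a + s *\<^sub>R d) has_derivative (\<lambda>s. s *\<^sub>R d)) (at t)"
    by (auto intro!: derivative_eq_intros)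
  have "((\<lambda>s. F (a + s *\<^sub>R d)) has_derivative (\<lambda>s. ?L (s *\<^sub>R d))) (at t)"
    by (rule has_derivative_compose[OF l F])
  moreover have "(\<lambda>s. ?L (s *\<^sub>R d)) = (*) (gradF F (a + t *\<^sub>R d) \<bullet> d)"
    using lin grad_apply[OF assms, of d] by (auto simp: linear_scale)
  ultimately show ?thesis unfolding has_field_derivative_def by simp
qed

lemma line_deriv2:
  fixes F :: "real^'n \<Rightarrow> real"
  assumes "gradF F differentiable (at (a + t *\<^sub>R d))"
  shows "((\<lambda>s. gradF F (a + s *\<^sub>R d) \<bullet> d) has_real_derivative
           ((jacobian (gradF F) (at (a + t *\<^sub>R d)) *v d) \<bullet> d)) (at t)"
proof -
  let ?H = "jacobian (gradF F) (at (a + t *\<^sub>R d))"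
  have G: "(gradF F has_derivative (\<lambda>h. ?H *v h)) (at (a + t *\<^sub>R d))"
    using assms jacobian_works by blast
  have l: "((\<lambda>s. a + s *\<^sub>R d) has_derivative (\<lambda>s. s *\<^sub>R d)) (at t)"
    by (auto intro!: derivative_eq_intros)
  have "((\<lambda>s. gradF F (a + s *\<^sub>R d)) has_derivative (\<lambda>s. ?H *v (s *\<^sub>R d))) (at t)"
    by (rule has_derivative_compose[OF l G])
  hence "((\<lambda>s. gradF F (a + s *\<^sub>R d) \<bullet> d) has_derivative (\<lambda>s. (?H *v (s *\<^sub>R d)) \<bullet> d)) (at t)"
    by (rule bounded_linear.has_derivative[OF bounded_linear_inner_left])
  moreover have "(\<lambda>s. (?H *v (s *\<^sub>R d)) \<bullet> d) = (*) ((?H *v d) \<bullet> d)"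
    by (auto simp: matrix_vector_mult_scaleR)
  ultimately show ?thesis unfolding has_field_derivative_def by simp
qed

lemma convex_line:
  fixes F :: "real^'n \<Rightarrow> real"
  assumes d1: "\<And>t. t \<in> {0..1} \<Longrightarrow> F differentiable (at (a + t *\<^sub>R d))"
    and d2: "\<And>t. t \<in> {0..1} \<Longrightarrow> gradF F differentiable (at (a + t *\<^sub>R d))"
    and pos: "\<And>t. t \<in> {0..1} \<Longrightarrow> 0 \<le> (jacobian (gradF F) (at (a + t *\<^sub>R d)) *v d) \<bullet> d"
  shows "convex_on {0..1} (\<lambda>t. F (a + t *\<^sub>R d))"
proof (rule convex_on_realI[where f' = "\<lambda>t. gradF F (a + t *\<^sub>R d) \<bullet> d"])
  show "connected {0..1::real}" by simp
  show "((\<lambda>t. F (a + t *\<^sub>R d)) has_real_derivative gradF F (a + x *\<^sub>R d) \<bullet> d) (at x)"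
    if "x \<in> {0..1}" for x using line_deriv[OF d1[OF that]] .
  show "gradF F (a + x *\<^sub>R d) \<bullet> d \<le> gradF F (a + y *\<^sub>R d) \<bullet> d"
    if xy: "x \<in> {0..1}" "y \<in> {0..1}" "x \<le> y" for x y
  proof (cases "x = y")
    case True thus ?thesis by simp
  next
    case False
    hence "x < y" using xy by simp
    then obtain z where z: "x < z" "z < y"
      "gradF F (a + y *\<^sub>R d) \<bullet> d - gradF F (a + x *\<^sub>R d) \<bullet> d
        = (y - x) * ((jacobian (gradF F) (at (a + z *\<^sub>R d)) *v d) \<bullet> d)"
      using MVT2[of x y "\<lambda>s. gradF F (a + s *\<^sub>R d) \<bullet> d"
          "\<lambda>s. (jacobian (gradF F) (at (a + s *\<^sub>R d)) *v d) \<bullet> d"]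
        line_deriv2[OF d2] xy by auto
    have "z \<in> {0..1}" using z xy by auto
    hence "0 \<le> (y - x) * ((jacobian (gradF F) (at (a + z *\<^sub>R d)) *v d) \<bullet> d)"
      using pos \<open>x < y\<close> by simp
    thus ?thesis using z(3) by simp
  qed
qed

lemma convex_on_from_lines:
  fixes G :: "real^'n \<Rightarrow> real"
  assumes "convex C"
    and L: "\<And>a b. a \<in> C \<Longrightarrow> b \<in> C \<Longrightarrow> convex_on {0..1} (\<lambda>t. G (a + t *\<^sub>R (b - a)))"
  shows "convex_on C G"
proof (rule convex_onI[OF _ assms(1)])
  fix t :: real and x y assume t: "0 < t" "t < 1" and xy: "x \<in> C" "y \<in> C"
  have "(\<lambda>s. G (x + s *\<^sub>R (y - x))) ((1 - t) *\<^sub>R 0 + t *\<^sub>R 1)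
     \<le> (1 - t) * (\<lambda>s. G (x + s *\<^sub>R (y - x))) 0 + t * (\<lambda>s. G (x + s *\<^sub>R (y - x))) 1"
    using convex_onD[OF L[OF xy], of t 0 1] t by simp
  moreover have "x + t *\<^sub>R (y - x) = (1 - t) *\<^sub>R x + t *\<^sub>R y" by (simp add: algebra_simps)
  ultimately show "G ((1 - t) *\<^sub>R x + t *\<^sub>R y) \<le> (1 - t) * G x + t * G y" by simp
qed



lemma jacobian_apply:
  fixes F :: "real^'n \<Rightarrow> real^'m"
  assumes "(F has_derivative D) (at x)"
  shows "jacobian F (at x) *v h = D h"
proof -
  have "F differentiable (at x)" using assms differentiableI by blast
  hence "(F has_derivative (\<lambda>h. jacobian F (at x) *v h)) (at x)" using jacobian_works by blast
  hence "(\<lambda>h. jacobian F (at x) *v h) = D" using has_derivative_unique assms by blast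
  thus ?thesis by metis
qed

definition Pmat :: "'n set \<Rightarrow> real^'n^'n" where
  "Pmat S = (\<chi> i j. if i = j \<and> i \<in> S then 1 else 0)"

lemma Pmat_mult: "Pmat S *v h = proj S h"
  by (simp add: Finite_Cartesian_Product.vec_eq_iff Pmat_def matrix_vector_mult_def if_distrib[of "\<lambda>x. x * _"] sum.delta cong: if_cong)

lemma reg_eq: "regularized p f tau y i z =
   f i z + tau / 2 * ((proj (blk p i) z - proj (blk p i) y) \<bullet> (proj (blk p i) z - proj (blk p i) y))"
  unfolding regularized_def by (simp add: power2_norm_eq_inner)

lemma reg_hasderiv:
  assumes "(f i has_derivative L) (at z)"
  shows "(regularized p f tau y i has_derivative
     (\<lambda>h. L h + tau * ((proj (blk p i) z - proj (blk p i) y) \<bullet> proj (blk p i) h))) (at z)"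
proof -
  let ?S = "blk p i"
  have w: "((\<lambda>z. proj ?S z - proj ?S y) has_derivative proj ?S) (at z)"
    using has_derivative_diff[OF bounded_linear_imp_has_derivative[OF bounded_linear_proj] has_derivative_const]
    by simp
  have ww: "((\<lambda>z. (proj ?S z - proj ?S y) \<bullet> (proj ?S z - proj ?S y)) has_derivative
      (\<lambda>h. (proj ?S z - proj ?S y) \<bullet> proj ?S h + proj ?S h \<bullet> (proj ?S z - proj ?S y))) (at z)"
    by (rule has_derivative_inner[OF w w])
  have g: "((\<lambda>z. tau / 2 * ((proj ?S z - proj ?S y) \<bullet> (proj ?S z - proj ?S y))) has_derivative
      (\<lambda>h. tau / 2 * ((proj ?S z - proj ?S y) \<bullet> proj ?S h + proj ?S h \<bullet> (proj ?S z - proj ?S y)))) (at z)"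
    by (rule has_derivative_mult_right[OF ww])
  have "((\<lambda>z. f i z + tau / 2 * ((proj ?S z - proj ?S y) \<bullet> (proj ?S z - proj ?S y))) has_derivative
      (\<lambda>h. L h + tau / 2 * ((proj ?S z - proj ?S y) \<bullet> proj ?S h + proj ?S h \<bullet> (proj ?S z - proj ?S y)))) (at z)"
    by (rule has_derivative_add[OF assms g])
  moreover have "regularized p f tau y i = (\<lambda>z. f i z + tau / 2 * ((proj ?S z - proj ?S y) \<bullet> (proj ?S z - proj ?S y)))"
    using reg_eq by blast
  ultimately show ?thesis
    by (rule_tac has_derivative_eq_rhs) (auto simp: inner_commute algebra_simps)
qed

lemma reg_diff:
  assumes "f i differentiable (at z)"
  shows "regularized p f tau y i differentiable (at z)"
  using reg_hasderiv[of f i _ z] assms differentiableI unfolding differentiable_def by blast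

lemma reg_grad:
  assumes "f i differentiable (at z)"
  shows "gradF (regularized p f tau y i) z = gradF (f i) z + tau *\<^sub>R (proj (blk p i) z - proj (blk p i) y)"
proof -
  let ?S = "blk p i"
  let ?L = "frechet_derivative (f i) (at z)"
  have "(f i has_derivative ?L) (at z)" using assms frechet_derivative_works by blast
  hence "frechet_derivative (regularized p f tau y i) (at z) =
     (\<lambda>h. ?L h + tau * ((proj ?S z - proj ?S y) \<bullet> proj ?S h))"
    using reg_hasderiv[of f i _ z p tau y] frechet_derivative_at by metis
  moreover have "(proj ?S z - proj ?S y) \<bullet> proj ?S (axis k 1) = (proj ?S z - proj ?S y) $ k" for k
  proof -
    have "(proj ?S z - proj ?S y) \<bullet> proj ?S (axis k 1) = proj ?S (proj ?S z - proj ?S y) \<bullet> axis k 1"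
      by (simp add: proj_inner)
    also have "\<dots> = (proj ?S z - proj ?S y) \<bullet> axis k 1" by (simp add: proj_diff)
    also have "\<dots> = (proj ?S z - proj ?S y) $ k" by (simp add: inner_axis)
    finally show ?thesis .
  qed
  ultimately show ?thesis unfolding gradF_def by (simp add: Finite_Cartesian_Product.vec_eq_iff)
qed

lemma Fmap_reg:
  assumes "f i differentiable (at z)"
  shows "Fmap p (regularized p f tau y) i z = Fmap p f i z + tau *\<^sub>R (proj (blk p i) z - proj (blk p i) y)"
  unfolding Fmap_def reg_grad[where f=f and i=i and z=z, OF assms] by (simp add: proj_add proj_scaleR proj_diff)

lemma gradF_reg_deriv:
  assumes U: "open U" "x \<in> U" "\<And>z. z \<in> U \<Longrightarrow> f i differentiable (at z)"
    and g: "gradF (f i) differentiable (at x)"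
  shows "(gradF (regularized p f tau y i) has_derivative
          (\<lambda>h. jacobian (gradF (f i)) (at x) *v h + tau *\<^sub>R proj (blk p i) h)) (at x)"
proof -
  let ?S = "blk p i"
  have G: "(gradF (f i) has_derivative (\<lambda>h. jacobian (gradF (f i)) (at x) *v h)) (at x)"
    using g jacobian_works by blast
  have w: "((\<lambda>z. proj ?S z - proj ?S y) has_derivative proj ?S) (at x)"
    using has_derivative_diff[OF bounded_linear_imp_has_derivative[OF bounded_linear_proj] has_derivative_const]
    by simp
  have "((\<lambda>z. gradF (f i) z + tau *\<^sub>R (proj ?S z - proj ?S y)) has_derivative
          (\<lambda>h. jacobian (gradF (f i)) (at x) *v h + tau *\<^sub>R proj ?S h)) (at x)"
    by (intro has_derivative_add G has_derivative_scaleR_right w)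
  thus ?thesis
    by (rule has_derivative_transform_within_open[OF _ U(1) U(2)]) (simp add: reg_grad U(3))
qed

lemma Fmap_deriv:
  assumes g: "gradF (f i) differentiable (at x)"
  shows "(Fmap p f i has_derivative (\<lambda>h. proj (blk p i) (jacobian (gradF (f i)) (at x) *v h))) (at x)"
proof -
  have G: "(gradF (f i) has_derivative (\<lambda>h. jacobian (gradF (f i)) (at x) *v h)) (at x)"
    using g jacobian_works by blast
  show ?thesis unfolding Fmap_def[abs_def]
    by (rule bounded_linear.has_derivative[OF bounded_linear_proj G])
qed

lemma JF_apply:
  assumes g: "gradF (f i) differentiable (at x)"
  shows "JF p f i x *v h = proj (blk p i) (jacobian (gradF (f i)) (at x) *v h)"
  unfolding JF_def by (rule jacobian_apply[OF Fmap_deriv[of f i x p, OF g]])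

lemma JF_reg_apply:
  assumes U: "open U" "x \<in> U" "\<And>z. z \<in> U \<Longrightarrow> f i differentiable (at z)"
    and g: "gradF (f i) differentiable (at x)"
  shows "JF p (regularized p f tau y) i x *v h = JF p f i x *v h + tau *\<^sub>R proj (blk p i) h"
proof -
  let ?S = "blk p i"
  have w: "((\<lambda>z. proj ?S z - proj ?S y) has_derivative proj ?S) (at x)"
    using has_derivative_diff[OF bounded_linear_imp_has_derivative[OF bounded_linear_proj] has_derivative_const]
    by simp
  have "((\<lambda>z. Fmap p f i z + tau *\<^sub>R (proj ?S z - proj ?S y)) has_derivative
          (\<lambda>h. proj ?S (jacobian (gradF (f i)) (at x) *v h) + tau *\<^sub>R proj ?S h)) (at x)"
    by (intro has_derivative_add Fmap_deriv[of f i x p, OF g] has_derivative_scaleR_right w)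
  hence "(Fmap p (regularized p f tau y) i has_derivative
          (\<lambda>h. proj ?S (jacobian (gradF (f i)) (at x) *v h) + tau *\<^sub>R proj ?S h)) (at x)"
    by (rule has_derivative_transform_within_open[OF _ U(1) U(2)]) (simp add: Fmap_reg U(3))
  hence "JF p (regularized p f tau y) i x *v h = proj ?S (jacobian (gradF (f i)) (at x) *v h) + tau *\<^sub>R proj ?S h"
    unfolding JF_def by (rule jacobian_apply)
  thus ?thesis using JF_apply[of f i x p, OF g] by simp
qed

lemma jac_reg:
  assumes U: "open U" "x \<in> U" "\<And>z. z \<in> U \<Longrightarrow> f i differentiable (at z)"
    and g: "gradF (f i) differentiable (at x)"
  shows "jacobian (gradF (regularized p f tau y i)) (at x) = jacobian (gradF (f i)) (at x) + tau *\<^sub>R Pmat (blk p i)"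
  unfolding matrix_eq
  using jacobian_apply[OF gradF_reg_deriv[of U x f i, OF U g]]
  by (simp add: matrix_vector_mult_add_rdistrib scaleR_matrix_vector_assoc[symmetric] Pmat_mult)

lemma blk_disj: "i \<noteq> j \<Longrightarrow> blk p i \<inter> blk p j = {}"
  by (auto simp: blk_def)

lemma Q_nonempty:
  assumes "assumption1 N p Qs f"
  shows "jointQ N p Qs \<noteq> {}"
proof -
  have "\<forall>i<N. \<exists>q. q \<in> Qs i" using assms unfolding assumption1_def by auto
  then obtain q where q: "\<And>i. i<N \<Longrightarrow> q i \<in> Qs i" by metis
  have pq: "proj (blk p i) (q i) = q i" if "i<N" for i
    using assms q[OF that] that unfolding assumption1_def by blast
  define x where "x = (\<Sum>i<N. q i)"
  have "proj (blk p j) x = q j" if j: "j<N" for j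
  proof -
    have "proj (blk p j) x = (\<Sum>i<N. proj (blk p j) (q i))"
      unfolding x_def using linear_sum[OF linear_proj] by auto
    also have "\<dots> = proj (blk p j) (q j) + (\<Sum>i\<in>{..<N}-{j}. proj (blk p j) (q i))"
      using j by (subst sum.remove[of _ j]) auto
    also have "(\<Sum>i\<in>{..<N}-{j}. proj (blk p j) (q i)) = 0"
    proof (rule sum.neutral, rule ballI)
      fix i assume "i \<in> {..<N}-{j}"
      hence "i < N" "i \<noteq> j" by auto
      thus "proj (blk p j) (q i) = 0" using pq[of i] proj_disj[OF blk_disj, of j i p "q i"] by simp
    qed
    finally show ?thesis using pq[OF j] by simp
  qed
  hence "x \<in> jointQ N p Qs" unfolding jointQ_def using q by auto
  thus ?thesis by blast
qed

lemma Q_move: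
  assumes A1: "assumption1 N p Qs f" and x: "x \<in> jointQ N p Qs" and i: "i < N" and v: "v \<in> Qs i"
  shows "v + (x - proj (blk p i) x) \<in> jointQ N p Qs"
proof -
  have pv: "proj (blk p i) v = v" using A1 v i unfolding assumption1_def by blast
  have "proj (blk p j) (v + (x - proj (blk p i) x)) \<in> Qs j" if j: "j < N" for j
  proof (cases "j = i")
    case True thus ?thesis using pv v by (simp add: proj_add proj_diff)
  next
    case False
    have "proj (blk p j) v = 0" using pv proj_disj[OF blk_disj[OF False], of p v] by metis
    moreover have "proj (blk p j) (proj (blk p i) x) = 0" using proj_disj[OF blk_disj[OF False]] by blast
    ultimately show ?thesis using x j unfolding jointQ_def by (simp add: proj_add proj_diff)
  qed
  thus ?thesis unfolding jointQ_def by blast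
qed

lemma JF_bound:
  fixes f :: "nat \<Rightarrow> real^'n \<Rightarrow> real"
  assumes A2: "assumption2 N p Qs f" and i: "i < N"
  shows "\<exists>K\<ge>0. \<forall>x\<in>jointQ N p Qs. \<forall>w. norm (JF p f i x *v w) \<le> K * norm w"
proof -
  obtain U where U: "open U" "jointQ N p Qs \<subseteq> U" "\<forall>x\<in>U. gradF (f i) differentiable (at x)"
    "bounded ((\<lambda>x. jacobian (gradF (f i)) (at x)) ` jointQ N p Qs)"
    using A2 i unfolding assumption2_def by blast
  obtain B where B: "\<forall>x\<in>jointQ N p Qs. norm (jacobian (gradF (f i)) (at x)) \<le> B"
    using U(4) unfolding bounded_iff by blast
  define K where "K = real CARD('n) * real CARD('n) * \<bar>B\<bar>"
  have "K \<ge> 0" unfolding K_def by simp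
  moreover have "norm (JF p f i x *v w) \<le> K * norm w" if x: "x \<in> jointQ N p Qs" for x w
  proof -
    let ?H = "jacobian (gradF (f i)) (at x)"
    have comp: "\<bar>?H $ a $ b\<bar> \<le> \<bar>B\<bar>" for a b
    proof -
      have "\<bar>?H $ a $ b\<bar> \<le> norm (?H $ a)" by (rule component_le_norm_cart)
      also have "\<dots> \<le> norm ?H" by (rule Finite_Cartesian_Product.norm_nth_le)
      also have "\<dots> \<le> \<bar>B\<bar>" using B x by force
      finally show ?thesis .
    qed
    have "norm (JF p f i x *v w) = norm (proj (blk p i) (?H *v w))"
      using JF_apply[of f i x p] U x by auto
    also have "\<dots> \<le> norm (?H *v w)" by (rule norm_proj_le)
    also have "\<dots> \<le> onorm ((*v) ?H) * norm w" by (rule onorm[OF matrix_vector_mul_bounded_linear])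
    also have "\<dots> \<le> K * norm w"
    proof -
      have "onorm ((*v) ?H) \<le> real CARD('n) * real CARD('n) * \<bar>B\<bar>"
        by (rule onorm_le_matrix_component) (rule comp)
      thus ?thesis unfolding K_def by (intro mult_right_mono) auto
    qed
    finally show ?thesis .
  qed
  ultimately show ?thesis by blast
qed

lemma ll_lower:
  assumes S: "S \<noteq> {}" and K: "\<forall>w. norm (M *v w) \<le> K * norm w"
  shows "- K \<le> lambda_least S M"
proof -
  obtain v where v: "v \<noteq> 0" "proj S v = v" "lambda_least S M * (v \<bullet> v) = v \<bullet> (M *v v)"
    using lambda_attained[OF S] by blast
  have "- (v \<bullet> (M *v v)) \<le> norm v * norm (M *v v)"
    using Cauchy_Schwarz_ineq2[of v "M *v v"] by linarith
  also have "\<dots> \<le> norm v * (K * norm v)" using K by (simp add: mult_left_mono)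
  also have "\<dots> = K * (v \<bullet> v)" by (simp add: power2_norm_eq_inner[symmetric] power2_eq_square)
  finally have "- K * (v \<bullet> v) \<le> lambda_least S M * (v \<bullet> v)" using v(3) by simp
  moreover have "v \<bullet> v > 0" using v(1) by simp
  ultimately show ?thesis by (intro mult_right_le_imp_le[of "- K" "v \<bullet> v"]) auto
qed

lemma bn_bound:
  assumes K: "K \<ge> 0" "\<forall>w. norm (M *v w) \<le> K * norm w"
  shows "block_norm S T M \<le> K" and "0 \<le> block_norm S T M"
proof -
  show "block_norm S T M \<le> K" unfolding block_norm_def
  proof (rule onorm_le)
    fix v
    have "norm (proj S (M *v proj T v)) \<le> norm (M *v proj T v)" by (rule norm_proj_le)
    also have "\<dots> \<le> K * norm (proj T v)" using K by blast
    also have "\<dots> \<le> K * norm v" using K by (intro mult_left_mono norm_proj_le) auto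
    finally show "norm (proj S (M *v proj T v)) \<le> K * norm v" .
  qed
  show "0 \<le> block_norm S T M" unfolding block_norm_def
    by (intro onorm_pos_le bounded_linear_compose[OF bounded_linear_proj]
        bounded_linear_compose[OF matrix_vector_mul_bounded_linear bounded_linear_proj])
qed



theorem mainTheorem5:
  fixes N :: nat and p :: "'n::finite \<Rightarrow> nat"
    and Qs :: "nat \<Rightarrow> (real^'n) set" and f :: "nat \<Rightarrow> real^'n \<Rightarrow> real"
    and y :: "real^'n" and tau :: real
  assumes "N \<ge> 1" and "players N p"
    and "assumption1 N p Qs f" and "assumption2 N p Qs f"
    and "tau > Max ((\<lambda>i. (\<Sum>j\<in>{..<N} - {i}. beta_max N p Qs f i j) - alpha_min N p Qs f i) ` {..<N})"
  shows "P_Upsilon_NEP N p Qs (regularized p f tau y)"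
proof -
  let ?R = "regularized p f tau y"
  let ?Q = "jointQ N p Qs"
  have A1: "assumption1 N p Qs f" and A2: "assumption2 N p Qs f" using assms by auto
  have Qne: "?Q \<noteq> {}" by (rule Q_nonempty[OF A1])
  then obtain x0 where x0: "x0 \<in> ?Q" by blast
  have Sne: "\<And>i. i<N \<Longrightarrow> blk p i \<noteq> {}" using assms(2) unfolding players_def by blast
  have U2: "\<exists>U. open U \<and> ?Q \<subseteq> U \<and> (\<forall>x\<in>U. f i differentiable (at x)) \<and>
        (\<forall>x\<in>U. gradF (f i) differentiable (at x)) \<and>
        continuous_on U (\<lambda>x. jacobian (gradF (f i)) (at x)) \<and>
        bounded ((\<lambda>x. jacobian (gradF (f i)) (at x)) ` ?Q)" if "i < N" for i
    using A2 that unfolding assumption2_def by blast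
  have JFR: "JF p ?R i x *v h = JF p f i x *v h + tau *\<^sub>R proj (blk p i) h"
    if i: "i < N" and x: "x \<in> ?Q" for i x h
  proof -
    obtain U where U: "open U" "?Q \<subseteq> U" "\<forall>x\<in>U. f i differentiable (at x)"
        "\<forall>x\<in>U. gradF (f i) differentiable (at x)" using U2[OF i] by blast
    show ?thesis using JF_reg_apply[of U x f i p tau y h] U x by blast
  qed
  have JFf: "JF p f i x *v h = proj (blk p i) (jacobian (gradF (f i)) (at x) *v h)"
    if i: "i < N" and x: "x \<in> ?Q" for i x h
  proof -
    obtain U where U: "?Q \<subseteq> U" "\<forall>x\<in>U. gradF (f i) differentiable (at x)" using U2[OF i] by blast
    show ?thesis using JF_apply[of f i x p h] U x by blast
  qed
  have beta_nonneg: "0 \<le> beta_max N p Qs f i j" if i: "i < N" for i j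
  proof -
    obtain K where K: "K \<ge> 0" "\<forall>x\<in>?Q. \<forall>w. norm (JF p f i x *v w) \<le> K * norm w"
      using JF_bound[OF A2 i] by blast
    have bdd: "bdd_above ((\<lambda>x. block_norm (blk p i) (blk p j) (JF p f i x)) ` ?Q)"
      unfolding bdd_above_def using bn_bound(1)[OF K(1)] K(2) by blast
    show ?thesis unfolding beta_max_def
      by (rule cSup_upper2[OF imageI[OF x0] _ bdd]) (use bn_bound(2)[OF K(1)] K(2) x0 in blast)
  qed
  have beta_eq: "beta_max N p Qs ?R i j = beta_max N p Qs f i j" if i: "i < N" and ji: "j \<noteq> i" for i j
    unfolding beta_max_def
  proof (rule arg_cong[where f=Sup], rule image_cong[OF refl])
    fix x assume x: "x \<in> ?Q"
    have "(\<lambda>v. proj (blk p i) (JF p ?R i x *v proj (blk p j) v)) = (\<lambda>v. proj (blk p i) (JF p f i x *v proj (blk p j) v))"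
    proof
      fix v
      have "proj (blk p i) (proj (blk p j) (proj (blk p j) v)) = 0"
        using proj_disj[OF blk_disj] ji by metis
      thus "proj (blk p i) (JF p ?R i x *v proj (blk p j) v) = proj (blk p i) (JF p f i x *v proj (blk p j) v)"
        unfolding JFR[OF i x] by (simp add: proj_add proj_scaleR)
    qed
    thus "block_norm (blk p i) (blk p j) (JF p ?R i x) = block_norm (blk p i) (blk p j) (JF p f i x)"
      unfolding block_norm_def by simp
  qed
  have ll_ge: "alpha_min N p Qs f i \<le> lambda_least (blk p i) (JF p f i x)" if i: "i < N" and x: "x \<in> ?Q" for i x
  proof -
    obtain K where K: "K \<ge> 0" "\<forall>x\<in>?Q. \<forall>w. norm (JF p f i x *v w) \<le> K * norm w"
      using JF_bound[OF A2 i] by blast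
    have bdd: "bdd_below ((\<lambda>x. lambda_least (blk p i) (JF p f i x)) ` ?Q)"
      unfolding bdd_below_def using ll_lower[OF Sne[OF i]] K(2) by blast
    show ?thesis unfolding alpha_min_def by (rule cInf_lower[OF imageI[OF x] bdd])
  qed
  have alphaR: "alpha_min N p Qs f i + tau \<le> alpha_min N p Qs ?R i" if i: "i < N" for i
    unfolding alpha_min_def[of N p Qs ?R]
  proof (rule cInf_greatest)
    show "(\<lambda>x. lambda_least (blk p i) (JF p ?R i x)) ` ?Q \<noteq> {}" using Qne by blast
    fix l assume "l \<in> (\<lambda>x. lambda_least (blk p i) (JF p ?R i x)) ` ?Q"
    then obtain x where x: "x \<in> ?Q" and l: "l = lambda_least (blk p i) (JF p ?R i x)" by blast
    obtain v where v: "v \<noteq> 0" "proj (blk p i) v = v" "l * (v \<bullet> v) = v \<bullet> (JF p ?R i x *v v)"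
      using lambda_attained[OF Sne[OF i], of "JF p ?R i x"] l by blast
    have "l * (v \<bullet> v) = v \<bullet> (JF p f i x *v v) + tau * (v \<bullet> v)"
      using v unfolding JFR[OF i x] by (simp add: inner_add_right)
    also have "\<dots> \<ge> lambda_least (blk p i) (JF p f i x) * (v \<bullet> v) + tau * (v \<bullet> v)"
      using lambda_rayleigh[OF Sne[OF i] v(2)] by simp
    finally have "(lambda_least (blk p i) (JF p f i x) + tau) * (v \<bullet> v) \<le> l * (v \<bullet> v)"
      by (simp add: algebra_simps)
    moreover have "v \<bullet> v > 0" using v(1) by simp
    ultimately have "lambda_least (blk p i) (JF p f i x) + tau \<le> l" by simp
    thus "alpha_min N p Qs f i + tau \<le> l" using ll_ge[OF i x] by simp
  qed
  have tau_i: "(\<Sum>j\<in>{..<N}-{i}. beta_max N p Qs f i j) - alpha_min N p Qs f i < tau" if i: "i < N" for i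
  proof -
    have "(\<Sum>j\<in>{..<N}-{i}. beta_max N p Qs f i j) - alpha_min N p Qs f i
        \<le> Max ((\<lambda>i. (\<Sum>j\<in>{..<N} - {i}. beta_max N p Qs f i j) - alpha_min N p Qs f i) ` {..<N})"
      using i by (intro Max_ge) auto
    thus ?thesis using assms(5) by linarith
  qed
  have apos: "alpha_min N p Qs f i + tau > 0" if i: "i < N" for i
  proof -
    have "0 \<le> (\<Sum>j\<in>{..<N}-{i}. beta_max N p Qs f i j)" using beta_nonneg[OF i] by (simp add: sum_nonneg)
    thus ?thesis using tau_i[OF i] by linarith
  qed
  (* Assumption 1 *)
  have R1: "assumption1 N p Qs ?R"
    unfolding assumption1_def
  proof (intro conjI allI impI ballI)
    fix i assume i: "i < N"
    show "Qs i \<noteq> {}" "closed (Qs i)" "convex (Qs i)" "Qs i \<subseteq> {v. proj (blk p i) v = v}"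
      using A1 i unfolding assumption1_def by blast+
  next
    fix i assume i: "i < N"
    obtain U where U: "open U" "?Q \<subseteq> U" "\<forall>x\<in>U. f i differentiable (at x)"
      "continuous_on U (gradF (f i))" using A1 i unfolding assumption1_def by blast
    have "continuous_on U (\<lambda>z. gradF (f i) z + tau *\<^sub>R (proj (blk p i) z - proj (blk p i) y))"
      by (intro continuous_intros U(4) bounded_linear.continuous_on[OF bounded_linear_proj])
    hence "continuous_on U (gradF (?R i))"
      by (rule continuous_on_cong[THEN iffD1, OF refl, rotated]) (simp add: reg_grad U(3))
    moreover have "\<forall>x\<in>U. ?R i differentiable (at x)" using U(3) reg_diff by blast
    ultimately show "\<exists>U. open U \<and> ?Q \<subseteq> U \<and> (\<forall>x\<in>U. ?R i differentiable (at x)) \<and> continuous_on U (gradF (?R i))"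
      using U by blast
  next
    fix i x assume i: "i < N" and x: "x \<in> ?Q"
    obtain U where U: "open U" "?Q \<subseteq> U" "\<forall>x\<in>U. f i differentiable (at x)"
        "\<forall>x\<in>U. gradF (f i) differentiable (at x)" using U2[OF i] by blast
    have cvx: "convex (Qs i)" and sub: "Qs i \<subseteq> {v. proj (blk p i) v = v}"
      using A1 i unfolding assumption1_def by blast+
    define c where "c = x - proj (blk p i) x"
    show "convex_on (Qs i) (\<lambda>v. ?R i (v + (x - proj (blk p i) x)))"
      unfolding c_def[symmetric]
    proof (rule convex_on_from_lines[OF cvx])
      fix a b assume a: "a \<in> Qs i" and b: "b \<in> Qs i"
      define d where "d = b - a"
      have "proj (blk p i) a = a" "proj (blk p i) b = b" using a b sub by auto
      hence pd: "proj (blk p i) d = d" unfolding d_def by (simp add: proj_diff)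
      have pts: "(a + c) + t *\<^sub>R d \<in> ?Q" if t: "t \<in> {0..1}" for t
      proof -
        have "(1 - t) *\<^sub>R a + t *\<^sub>R b \<in> Qs i" using t a b cvx by (auto intro: convexD)
        moreover have "(1 - t) *\<^sub>R a + t *\<^sub>R b = a + t *\<^sub>R d" unfolding d_def by (simp add: algebra_simps)
        ultimately have "a + t *\<^sub>R d \<in> Qs i" by simp
        from Q_move[OF A1 x i this] show ?thesis unfolding c_def by (simp add: algebra_simps)
      qed
      have "convex_on {0..1} (\<lambda>t. ?R i ((a + c) + t *\<^sub>R d))"
      proof (rule convex_line)
        fix t :: real assume t: "t \<in> {0..1}"
        have zU: "(a + c) + t *\<^sub>R d \<in> U" using pts[OF t] U(2) by blast
        show "?R i differentiable (at ((a + c) + t *\<^sub>R d))" using reg_diff U(3) zU by blast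
        have GD: "(gradF (?R i) has_derivative
          (\<lambda>h. jacobian (gradF (f i)) (at ((a + c) + t *\<^sub>R d)) *v h + tau *\<^sub>R proj (blk p i) h)) (at ((a + c) + t *\<^sub>R d))"
          using gradF_reg_deriv[of U "(a + c) + t *\<^sub>R d" f i p tau y] U zU by blast
        thus "gradF (?R i) differentiable (at ((a + c) + t *\<^sub>R d))" using differentiableI by blast
        let ?z = "(a + c) + t *\<^sub>R d"
        let ?J = "jacobian (gradF (f i)) (at ?z)"
        have "(jacobian (gradF (?R i)) (at ?z) *v d) \<bullet> d = (?J *v d + tau *\<^sub>R proj (blk p i) d) \<bullet> d"
          using jacobian_apply[OF GD] by simp
        also have "\<dots> = (?J *v d) \<bullet> d + tau * (d \<bullet> d)" using pd by (simp add: inner_add_left)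
        also have "(?J *v d) \<bullet> d = d \<bullet> (JF p f i ?z *v d)"
        proof -
          have "d \<bullet> (JF p f i ?z *v d) = d \<bullet> proj (blk p i) (?J *v d)" using JFf[OF i pts[OF t]] by simp
          also have "\<dots> = proj (blk p i) d \<bullet> (?J *v d)" by (simp add: proj_inner)
          finally show ?thesis using pd by (simp add: inner_commute)
        qed
        finally have eq: "(jacobian (gradF (?R i)) (at ?z) *v d) \<bullet> d = d \<bullet> (JF p f i ?z *v d) + tau * (d \<bullet> d)" .
        have "lambda_least (blk p i) (JF p f i ?z) * (d \<bullet> d) \<le> d \<bullet> (JF p f i ?z *v d)"
          by (rule lambda_rayleigh[OF Sne[OF i] pd])
        moreover have "alpha_min N p Qs f i * (d \<bullet> d) \<le> lambda_least (blk p i) (JF p f i ?z) * (d \<bullet> d)"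
          using ll_ge[OF i pts[OF t]] by (intro mult_right_mono) auto
        ultimately have "(alpha_min N p Qs f i + tau) * (d \<bullet> d) \<le> (jacobian (gradF (?R i)) (at ?z) *v d) \<bullet> d"
          unfolding eq by (simp add: algebra_simps)
        moreover have "0 \<le> (alpha_min N p Qs f i + tau) * (d \<bullet> d)" using apos[OF i] by simp
        ultimately show "0 \<le> (jacobian (gradF (?R i)) (at ?z) *v d) \<bullet> d" by linarith
      qed
      moreover have "(\<lambda>t. ?R i ((a + c) + t *\<^sub>R d)) = (\<lambda>t. ?R i (a + t *\<^sub>R (b - a) + c))"
        unfolding d_def by (simp add: algebra_simps)
      ultimately show "convex_on {0..1} (\<lambda>t. ?R i (a + t *\<^sub>R (b - a) + c))" by simp
    qed
  qed
  (* Assumption 2 *)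
  have R2: "assumption2 N p Qs ?R"
    unfolding assumption2_def
  proof (intro allI impI)
    fix i assume i: "i < N"
    obtain U where U: "open U" "?Q \<subseteq> U" "\<forall>x\<in>U. f i differentiable (at x)"
        "\<forall>x\<in>U. gradF (f i) differentiable (at x)"
        "continuous_on U (\<lambda>x. jacobian (gradF (f i)) (at x))"
        "bounded ((\<lambda>x. jacobian (gradF (f i)) (at x)) ` ?Q)" using U2[OF i] by blast
    have JR: "jacobian (gradF (?R i)) (at x) = jacobian (gradF (f i)) (at x) + tau *\<^sub>R Pmat (blk p i)"
      if "x \<in> U" for x using jac_reg[of U x f i p tau y] U that by blast
    have d1: "\<forall>x\<in>U. ?R i differentiable (at x)" using U(3) reg_diff by blast
    have d2: "\<forall>x\<in>U. gradF (?R i) differentiable (at x)"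
      using gradF_reg_deriv[of U _ f i p tau y] U differentiableI by blast
    have "continuous_on U (\<lambda>x. jacobian (gradF (f i)) (at x) + tau *\<^sub>R Pmat (blk p i))"
      by (intro continuous_intros U(5))
    hence c: "continuous_on U (\<lambda>x. jacobian (gradF (?R i)) (at x))"
      by (rule continuous_on_cong[THEN iffD1, OF refl, rotated]) (simp add: JR)
    have "(\<lambda>x. jacobian (gradF (?R i)) (at x)) ` ?Q
        = (\<lambda>M. tau *\<^sub>R Pmat (blk p i) + M) ` ((\<lambda>x. jacobian (gradF (f i)) (at x)) ` ?Q)"
      unfolding image_image using JR U(2) by (intro image_cong) (auto simp: add.commute)
    hence b: "bounded ((\<lambda>x. jacobian (gradF (?R i)) (at x)) ` ?Q)"
      using bounded_translation[OF U(6)] by simp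
    show "\<exists>U. open U \<and> ?Q \<subseteq> U \<and> (\<forall>x\<in>U. ?R i differentiable (at x)) \<and>
        (\<forall>x\<in>U. gradF (?R i) differentiable (at x)) \<and>
        continuous_on U (\<lambda>x. jacobian (gradF (?R i)) (at x)) \<and>
        bounded ((\<lambda>x. jacobian (gradF (?R i)) (at x)) ` ?Q)"
      using U(1,2) d1 d2 c b by blast
  qed
  (* P-matrix *)
  have RP: "P_matrix N (Upsilon N p Qs ?R)"
    unfolding P_matrix_def
  proof (intro allI impI)
    fix S assume S: "S \<subseteq> {..<N} \<and> S \<noteq> {}"
    show "principal_minor (Upsilon N p Qs ?R) S > 0"
    proof (rule dd_principal_minor_pos[of S N])
      show "S \<subseteq> {..<N}" using S by blast
      show "\<forall>i\<in>S. (\<Sum>j\<in>S - {i}. \<bar>Upsilon N p Qs ?R i j\<bar>) < Upsilon N p Qs ?R i i"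
      proof
        fix i assume iS: "i \<in> S"
        hence i: "i < N" using S by blast
        have "(\<Sum>j\<in>S - {i}. \<bar>Upsilon N p Qs ?R i j\<bar>) = (\<Sum>j\<in>S - {i}. beta_max N p Qs f i j)"
          by (intro sum.cong refl) (auto simp: Upsilon_def beta_eq[OF i] beta_nonneg[OF i])
        also have "\<dots> \<le> (\<Sum>j\<in>{..<N} - {i}. beta_max N p Qs f i j)"
          using S by (intro sum_mono2 beta_nonneg[OF i]) auto
        also have "\<dots> < alpha_min N p Qs f i + tau" using tau_i[OF i] by linarith
        also have "\<dots> \<le> Upsilon N p Qs ?R i i" using alphaR[OF i] by (simp add: Upsilon_def)
        finally show "(\<Sum>j\<in>S - {i}. \<bar>Upsilon N p Qs ?R i j\<bar>) < Upsilon N p Qs ?R i i" .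
      qed
    qed
  qed
  show ?thesis unfolding P_Upsilon_NEP_def using R1 R2 RP by blast
qed

end
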